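(* Let $T:\mathbb{R}_+^N\to\mathbb{R}_{++}^N$ be a standard interference mapping, let $\|\cdot\|_a$ and $\|\cdot\|_b$ be monotone norms on $\mathbb{R}^N$, and let $E$ be the $\|\cdot\|_b$-energy efficiency function defined in the context. Then $E$ is non-increasing: for all $\bar p_1>\bar p_2>0$, $E(\bar p_1)\le E(\bar p_2)$.
   Context: Vector inequalities are coordinatewise; $\mathbb{R}_+$, $\mathbb{R}_{++}$ denote nonnegative and positive reals. A norm $\|\cdot\|$ on $\mathbb{R}^N$ is monotone if $\mathbf{0}\le\mathbf{x}\le\mathbf{y}$ implies $\|\mathbf{x}\|\le\|\mathbf{y}\|$. A function $f:\mathbb{R}^N\to\mathbb{R}_{++}\cup\{\infty\}$ is a standard interference function if: (1) for all $\mathbf{x}\in\mathbb{R}_+^N$ and all $\alpha>1$, $\alpha f(\mathbf{x})>f(\alpha\mathbf{x})$; (2) for all $\mathbf{x}_1,\mathbf{x}_2\in\mathbb{R}_+^N$, $\mathbf{x}_1\ge\mathbf{x}_2$ implies $f(\mathbf{x}_1)\ge f(\mathbf{x}_2)$; (3) $f(\mathbf{x})=\infty$ iff $\mathbf{x}\notin\mathbb{R}_+^N$. A standard interference mapping is $T:\mathbb{R}_+^N\to\mathbb{R}_{++}^N$, $T(\mathbf{x})=(t_1(\mathbf{x}),\dots,t_N(\mathbf{x}))$, with each $t_i$ a standard interference function. For a power budget $\bar p>0$, consider the problem: maximize $c$ over $(\mathbf{p},c)\in\mathbb{R}_+^N\times\mathbb{R}_{++}$ subject to $\mathbf{p}=cT(\mathbf{p})$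 and $\|\mathbf{p}\|_a\le\bar p$. It is known that this problem has a unique solution $(\mathbf{p}_{\bar p},c_{\bar p})\in\mathbb{R}_{++}^N\times\mathbb{R}_{++}$, and that $\bar p_1>\bar p_2>0$ implies $\mathbf{p}_{\bar p_1}>\mathbf{p}_{\bar p_2}$ coordinatewise. Define $U(\bar p):=c_{\bar p}$, $P(\bar p):=\mathbf{p}_{\bar p}$, and $E(\bar p):=U(\bar p)/\|P(\bar p)\|_b$, which equals $1/\|T(\mathbf{p}_{\bar p})\|_b$. *)

theory Defs
  imports "HOL-Analysis.Analysis"
begin

definition nonneg_vec :: "real ^ 'n \<Rightarrow> bool" where
  "nonneg_vec x \<longleftrightarrow> (\<forall>i. 0 \<le> x $ i)"

definition vec_le :: "real ^ 'n \<Rightarrow> real ^ 'n \<Rightarrow> bool" where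
  "vec_le x y \<longleftrightarrow> (\<forall>i. x $ i \<le> y $ i)"

definition is_norm :: "(real ^ 'n \<Rightarrow> real) \<Rightarrow> bool" where
  "is_norm nm \<longleftrightarrow>
     (\<forall>x. 0 \<le> nm x) \<and> (\<forall>x. nm x = 0 \<longleftrightarrow> x = 0) \<and>
     (\<forall>a x. nm (a *\<^sub>R x) = \<bar>a\<bar> * nm x) \<and>
     (\<forall>x y. nm (x + y) \<le> nm x + nm y)"

definition monotone_norm :: "(real ^ 'n \<Rightarrow> real) \<Rightarrow> bool" where
  "monotone_norm nm \<longleftrightarrow> is_norm nm \<and>
     (\<forall>x y. nonneg_vec x \<and> vec_le x y \<longrightarrow> nm x \<le> nm y)"

text \<open>Standard interference function, considered on its effective domain R_+^N
  (outside R_+^N its value is +infinity by convention, which is not recorded).\<close>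
definition standard_interference_function :: "(real ^ 'n \<Rightarrow> real) \<Rightarrow> bool" where
  "standard_interference_function f \<longleftrightarrow>
     (\<forall>x. nonneg_vec x \<longrightarrow> 0 < f x) \<and>
     (\<forall>x \<alpha>. nonneg_vec x \<and> 1 < \<alpha> \<longrightarrow> f (\<alpha> *\<^sub>R x) < \<alpha> * f x) \<and>
     (\<forall>x1 x2. nonneg_vec x1 \<and> nonneg_vec x2 \<and> vec_le x2 x1 \<longrightarrow> f x2 \<le> f x1)"

definition standard_interference_mapping :: "(real ^ 'n \<Rightarrow> real ^ 'n) \<Rightarrow> bool" where
  "standard_interference_mapping T \<longleftrightarrow>
     (\<forall>i. standard_interference_function (\<lambda>x. T x $ i))"

definition feasible ::
  "(real ^ 'n \<Rightarrow> real ^ 'n) \<Rightarrow> (real ^ 'n \<Rightarrow> real) \<Rightarrow> real \<Rightarrow> real ^ 'n \<Rightarrow> real \<Rightarrow> bool" where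
  "feasible T na pbar p c \<longleftrightarrow>
     nonneg_vec p \<and> 0 < c \<and> p = c *\<^sub>R T p \<and> na p \<le> pbar"

definition is_solution ::
  "(real ^ 'n \<Rightarrow> real ^ 'n) \<Rightarrow> (real ^ 'n \<Rightarrow> real) \<Rightarrow> real \<Rightarrow> real ^ 'n \<Rightarrow> real \<Rightarrow> bool" where
  "is_solution T na pbar p c \<longleftrightarrow>
     feasible T na pbar p c \<and> (\<forall>p' c'. feasible T na pbar p' c' \<longrightarrow> c' \<le> c)"

definition sol :: "(real ^ 'n \<Rightarrow> real ^ 'n) \<Rightarrow> (real ^ 'n \<Rightarrow> real) \<Rightarrow> real \<Rightarrow> (real ^ 'n) \<times> real" where
  "sol T na pbar = (THE pc. is_solution T na pbar (fst pc) (snd pc))"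

definition U :: "(real ^ 'n \<Rightarrow> real ^ 'n) \<Rightarrow> (real ^ 'n \<Rightarrow> real) \<Rightarrow> real \<Rightarrow> real" where
  "U T na pbar = snd (sol T na pbar)"

definition P :: "(real ^ 'n \<Rightarrow> real ^ 'n) \<Rightarrow> (real ^ 'n \<Rightarrow> real) \<Rightarrow> real \<Rightarrow> real ^ 'n" where
  "P T na pbar = fst (sol T na pbar)"

definition E ::
  "(real ^ 'n \<Rightarrow> real ^ 'n) \<Rightarrow> (real ^ 'n \<Rightarrow> real) \<Rightarrow> (real ^ 'n \<Rightarrow> real) \<Rightarrow> real \<Rightarrow> real" where
  "E T na nb pbar = U T na pbar / nb (P T na pbar)"

end

theory Submission
  imports Defs
begin

lemma E_eq:
  assumes si: "standard_interference_mapping T"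
    and nb: "monotone_norm nb"
    and uq: "\<exists>!pc. is_solution T na pbar (fst pc) (snd pc)"
  shows "E T na nb pbar = 1 / nb (T (P T na pbar))"
    and "nonneg_vec (P T na pbar)"
proof -
  have "is_solution T na pbar (fst (sol T na pbar)) (snd (sol T na pbar))"
    unfolding sol_def using theI'[OF uq] by simp
  hence f: "feasible T na pbar (P T na pbar) (U T na pbar)"
    unfolding is_solution_def P_def U_def by simp
  let ?p = "P T na pbar" and ?c = "U T na pbar"
  have c: "0 < ?c" and pe: "?p = ?c *\<^sub>R T ?p" and nn: "nonneg_vec ?p"
    using f unfolding feasible_def by auto
  show "nonneg_vec ?p" by (fact nn)
  have nrm: "is_norm nb" using nb unfolding monotone_norm_def by simp
  have "nb ?p = ?c * nb (T ?p)"
    using nrm c pe unfolding is_norm_def by (metis abs_of_pos)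
  moreover have "T ?p \<noteq> 0"
  proof
    assume "T ?p = 0"
    moreover have "0 < T ?p $ undefined"
      using si nn unfolding standard_interference_mapping_def standard_interference_function_def by blast
    ultimately show False by simp
  qed
  hence "0 < nb (T ?p)" using nrm unfolding is_norm_def by (metis order_le_less)
  ultimately show "E T na nb pbar = 1 / nb (T ?p)"
    unfolding E_def using c by simp
qed

theorem lemma2:
  fixes T :: "real ^ 'n \<Rightarrow> real ^ 'n"
    and na nb :: "real ^ 'n \<Rightarrow> real"
  assumes "standard_interference_mapping T"
    and "monotone_norm na"
    and "monotone_norm nb"
    and known_unique: "\<And>pbar. 0 < pbar \<Longrightarrow>
           \<exists>!pc. is_solution T na pbar (fst pc) (snd pc)"
    and known_pos: "\<And>pbar i. 0 < pbar \<Longrightarrow> 0 < P T na pbar $ i"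
    and known_mono: "\<And>pbar1 pbar2 i. pbar1 > pbar2 \<Longrightarrow> pbar2 > 0 \<Longrightarrow>
           P T na pbar1 $ i > P T na pbar2 $ i"
  shows "\<forall>pbar1 pbar2. pbar1 > pbar2 \<and> pbar2 > 0 \<longrightarrow> E T na nb pbar1 \<le> E T na nb pbar2"
proof (intro allI impI, elim conjE)
  fix p1 p2 :: real
  assume h: "p1 > p2" "p2 > 0"
  have u1: "\<exists>!pc. is_solution T na p1 (fst pc) (snd pc)" using known_unique h by simp
  have u2: "\<exists>!pc. is_solution T na p2 (fst pc) (snd pc)" using known_unique h by simp
  note e1 = E_eq[OF assms(1) assms(3) u1] and e2 = E_eq[OF assms(1) assms(3) u2]
  let ?q1 = "P T na p1" and ?q2 = "P T na p2"
  have le: "vec_le ?q2 ?q1" unfolding vec_le_def using known_mono[OF h] less_imp_le by blast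
  have TT: "vec_le (T ?q2) (T ?q1)"
    using assms(1) e1(2) e2(2) le
    unfolding vec_le_def standard_interference_mapping_def standard_interference_function_def
    by blast
  have Tn: "nonneg_vec (T ?q2)"
    using assms(1) e2(2)
    unfolding nonneg_vec_def standard_interference_mapping_def standard_interference_function_def
    by (meson less_imp_le)
  have mono: "nb (T ?q2) \<le> nb (T ?q1)"
    using assms(3) TT Tn unfolding monotone_norm_def by blast
  have nrm: "is_norm nb" using assms(3) unfolding monotone_norm_def by simp
  have "T ?q2 \<noteq> 0"
  proof
    assume "T ?q2 = 0"
    moreover have "0 < T ?q2 $ undefined"
      using assms(1) e2(2) unfolding standard_interference_mapping_def standard_interference_function_def by blast
    ultimately show False by simp
  qed
  hence "0 < nb (T ?q2)" using nrm unfolding is_norm_def by (metis order_le_less)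
  thus "E T na nb p1 \<le> E T na nb p2" unfolding e1(1) e2(1) using mono
    by (simp add: frac_le)
qed

end
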